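(* Let $\mu_0\in\mathcal{P}(\mathbb{Z})$, $\varepsilon>0$ and $R\in\mathbb{N}$ with $R>R_{\mu_0}(\varepsilon)$. Then for all $n\in\mathbb{N}$ and all $w\in\Omega^{(0)}_n(\mu_0,2^{-R}\varepsilon)$, $|w_n|\le R+2\varepsilon n$.
   Context: $\overline{\mathbb{Z}}=\mathbb{Z}\cup\{\pm\infty\}$ with metric $d(h,k)=|\varphi(h)-\varphi(k)|$, $\varphi(\pm\infty)=\pm1$, $\varphi(k)=1-2^{-k}$ ($k\ge0$), $\varphi(k)=-1+2^{-|k|}$ ($k<0$). $\mathcal{P}(\mathbb{Z})$ is viewed inside $\mathcal{P}(\overline{\mathbb{Z}})$. For signed measures, $\|\nu\|=\sup\{\int f\,d\nu: f\text{ 1-Lipschitz for }d,\ \sup|f|\le1\}$; $B(\mu,\varepsilon)=\{\nu\in\mathcal{P}(\overline{\mathbb{Z}}):\|\nu-\mu\|<\varepsilon\}$. $\Omega^{(0)}_n$ is the set of $w=(w_1,\dots,w_n)\in\mathbb{Z}^n$ with $w_1=0$ and $|w_i-w_{i+1}|=1$; $\ell(w)=\frac1n\sum_{j}\delta_{w_j}$; $\Omega^{(0)}_n(\mu,\varepsilon)=\{w\in\Omega^{(0)}_n:\ell(w)\in B(\mu,\varepsilon)\}$. $R_{\mu_0}(\varepsilon)=\min\{R\in\mathbb{N}:\mu_0(\{-R+1,\dots,R-1\})>1-\varepsilon\}$. *)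

theory Defs
  imports "HOL-Probability.Probability"
begin

datatype zbar = Fin int | PInf | MInf

fun phi :: "zbar \<Rightarrow> real" where
  "phi PInf = 1"
| "phi MInf = -1"
| "phi (Fin k) = (if k \<ge> 0 then 1 - 2 powr (- real_of_int k) else -1 + 2 powr (- real_of_int \<bar>k\<bar>))"

definition dZ :: "zbar \<Rightarrow> zbar \<Rightarrow> real" where
  "dZ h k = \<bar>phi h - phi k\<bar>"

definition Lip1 :: "(zbar \<Rightarrow> real) set" where
  "Lip1 = {f. (\<forall>h k. \<bar>f h - f k\<bar> \<le> dZ h k) \<and> (\<forall>h. \<bar>f h\<bar> \<le> 1)}"

text \<open>Norm of the signed measure nu - mu for probability measures on the countable
  space zbar (every such measure is a pmf).\<close>
definition dist_norm :: "zbar pmf \<Rightarrow> zbar pmf \<Rightarrow> real" where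
  "dist_norm nu mu = (SUP f\<in>Lip1. measure_pmf.expectation nu f - measure_pmf.expectation mu f)"

definition embed :: "int pmf \<Rightarrow> zbar pmf" where
  "embed mu = map_pmf Fin mu"

definition Ball_Z :: "zbar pmf \<Rightarrow> real \<Rightarrow> zbar pmf set" where
  "Ball_Z mu eps = {nu. dist_norm nu mu < eps}"

text \<open>Walks w = (w_1,...,w_n) as lists of length n (w_i = w ! (i-1)).\<close>
definition Omega0 :: "nat \<Rightarrow> int list set" where
  "Omega0 n = {w. length w = n \<and> n \<ge> 1 \<and> w ! 0 = 0 \<and>
      (\<forall>i. i + 1 < n \<longrightarrow> \<bar>w ! i - w ! (i + 1)\<bar> = 1)}"

definition ell :: "int list \<Rightarrow> zbar pmf" where
  "ell w = pmf_of_multiset (mset (map Fin w))"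

definition Omega0_ball :: "nat \<Rightarrow> int pmf \<Rightarrow> real \<Rightarrow> int list set" where
  "Omega0_ball n mu eps = {w \<in> Omega0 n. ell w \<in> Ball_Z (embed mu) eps}"

definition R_mu :: "int pmf \<Rightarrow> real \<Rightarrow> nat" where
  "R_mu mu eps = (LEAST R::nat. measure_pmf.prob mu {- int R + 1 .. int R - 1} > 1 - eps)"

end

theory Submission
  imports Defs
begin

lemma abs_phi_Fin: "\<bar>phi (Fin k)\<bar> = 1 - 2 powr (- real_of_int \<bar>k\<bar>)"
proof -
  have "2 powr (- real_of_int \<bar>k\<bar>) \<le> 2 powr 0" by (rule powr_mono) auto
  then have "2 powr (- real_of_int \<bar>k\<bar>) \<le> 1" by simp
  moreover have "2 powr (- real_of_int \<bar>k\<bar>) > 0" by simp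
  ultimately show ?thesis by (cases "k \<ge> 0") auto
qed

lemma abs_phi_le: "\<bar>phi h\<bar> \<le> 1"
proof (cases h)
  case (Fin k)
  have "2 powr (- real_of_int \<bar>k\<bar>) > 0" by simp
  then show ?thesis unfolding Fin abs_phi_Fin by (smt (verit) abs_phi_Fin)
qed auto

definition fR :: "real \<Rightarrow> zbar \<Rightarrow> real" where
  "fR c h = max 0 (\<bar>phi h\<bar> - c)"

lemma fR_Lip1: assumes "0 \<le> c" "c \<le> 1" shows "fR c \<in> Lip1"
proof -
  have "\<bar>fR c h - fR c k\<bar> \<le> dZ h k" for h k
    unfolding fR_def dZ_def by (auto simp: max_def abs_if split: if_splits)
  moreover have "\<bar>fR c h\<bar> \<le> 1" for h
    using abs_phi_le[of h] assms unfolding fR_def by auto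
  ultimately show ?thesis unfolding Lip1_def by auto
qed

lemma integrable_bounded_pmf:
  fixes f :: "'a \<Rightarrow> real"
  assumes "\<And>x. \<bar>f x\<bar> \<le> B"
  shows "integrable (measure_pmf p) f"
  by (rule measure_pmf.integrable_const_bound[where B=B]) (use assms in auto)

lemma expectation_abs_le1:
  fixes f :: "'a \<Rightarrow> real"
  assumes "\<And>x. \<bar>f x\<bar> \<le> 1"
  shows "\<bar>measure_pmf.expectation p f\<bar> \<le> 1"
proof -
  have "\<bar>measure_pmf.expectation p f\<bar> \<le> measure_pmf.expectation p (\<lambda>x. \<bar>f x\<bar>)"
    by (rule integral_abs_bound)
  also have "\<dots> \<le> measure_pmf.expectation p (\<lambda>x. 1)"
    by (rule integral_mono) (use assms integrable_bounded_pmf[of f 1] in auto)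
  finally show ?thesis by simp
qed

lemma dist_norm_ge:
  assumes "f \<in> Lip1"
  shows "measure_pmf.expectation nu f - measure_pmf.expectation mu f \<le> dist_norm nu mu"
  unfolding dist_norm_def
proof (rule cSUP_upper[OF assms])
  have "measure_pmf.expectation nu g - measure_pmf.expectation mu g \<le> 2" if "g \<in> Lip1" for g
  proof -
    have b: "\<And>x. \<bar>g x\<bar> \<le> 1" using that unfolding Lip1_def by auto
    show ?thesis using expectation_abs_le1[of g nu, OF b] expectation_abs_le1[of g mu, OF b] by linarith
  qed
  then show "bdd_above ((\<lambda>f. measure_pmf.expectation nu f - measure_pmf.expectation mu f) ` Lip1)"
    by (auto intro!: bdd_aboveI[where M=2])
qed

lemma sum_list_count_real:
  fixes g :: "'a \<Rightarrow> real"
  shows "sum_list (map g xs) = (\<Sum>a\<in>set xs. real (count_list xs a) * g a)"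
proof (induction xs)
  case (Cons x xs)
  have "(\<Sum>a\<in>set (x#xs). real (count_list (x#xs) a) * g a)
      = (\<Sum>a\<in>insert x (set xs). real (count_list xs a) * g a) + g x"
  proof -
    have "(\<Sum>a\<in>set (x#xs). real (count_list (x#xs) a) * g a)
       = (\<Sum>a\<in>insert x (set xs). real (count_list xs a) * g a + (if a = x then g a else 0))"
      by (rule sum.cong) (auto simp: algebra_simps)
    also have "\<dots> = (\<Sum>a\<in>insert x (set xs). real (count_list xs a) * g a) + g x"
      by (simp only: sum.distrib) (simp add: sum.delta)
    finally show ?thesis .
  qed
  also have "(\<Sum>a\<in>insert x (set xs). real (count_list xs a) * g a) = (\<Sum>a\<in>set xs. real (count_list xs a) * g a)"
    by (cases "x \<in> set xs") (auto simp: insert_absorb count_list_0_iff)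
  finally show ?case using Cons by simp
qed simp

lemma expectation_ell:
  assumes "w \<noteq> []"
  shows "measure_pmf.expectation (ell w) g = (\<Sum>j<length w. g (Fin (w ! j))) / length w"
proof -
  let ?xs = "map Fin w"
  have ne: "mset ?xs \<noteq> {#}" using assms by simp
  have "measure_pmf.expectation (ell w) g = (\<Sum>a\<in>set ?xs. g a * pmf (ell w) a)"
    unfolding ell_def by (rule integral_measure_pmf_real) (use ne in auto)
  also have "\<dots> = (\<Sum>a\<in>set ?xs. count_list ?xs a * g a) / length w"
    unfolding ell_def using ne by (simp add: sum_divide_distrib flip: count_mset) (simp add: mult.commute)
  also have "(\<Sum>a\<in>set ?xs. count_list ?xs a * g a) = sum_list (map g ?xs)"
    by (rule sum_list_count_real[symmetric])
  also have "\<dots> = (\<Sum>j<length w. g (Fin (w ! j)))"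
    by (simp add: sum_list_sum_nth lessThan_atLeast0)
  finally show ?thesis .
qed

lemma walk_ivt:
  assumes "w \<in> Omega0 n"
  shows "k < n \<Longrightarrow> 0 \<le> v \<Longrightarrow> v \<le> \<bar>w ! k\<bar> \<Longrightarrow> \<exists>j\<le>k. \<bar>w ! j\<bar> = v"
proof (induction k)
  case 0
  then show ?case using assms by (auto simp: Omega0_def)
next
  case (Suc k)
  have "\<bar>w ! k - w ! (k+1)\<bar> = 1" using assms Suc.prems by (auto simp: Omega0_def)
  then have "\<bar>w ! Suc k\<bar> \<le> \<bar>w ! k\<bar> + 1" by auto
  show ?case
  proof (cases "v \<le> \<bar>w ! k\<bar>")
    case True
    then obtain j where "j \<le> k" "\<bar>w ! j\<bar> = v" using Suc by auto
    then show ?thesis by (intro exI[of _ j]) auto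
  next
    case False
    then have "v = \<bar>w ! Suc k\<bar>" using Suc.prems \<open>\<bar>w ! Suc k\<bar> \<le> \<bar>w ! k\<bar> + 1\<close> by linarith
    then show ?thesis by auto
  qed
qed

lemma geom_sum_half: "(\<Sum>i=a..a+m. (1/2::real)^i) = 2*(1/2)^a - (1/2)^(a+m)"
  by (induction m) (auto simp: algebra_simps)

lemma powr_half: "2 powr (- real v) = (1/2::real)^v"
  by (simp add: powr_minus powr_realpow power_one_over inverse_eq_divide)

lemma ex_R:
  fixes mu :: "int pmf"
  assumes "eps > 0"
  shows "\<exists>R::nat. measure_pmf.prob mu {- int R + 1 .. int R - 1} > 1 - eps"
proof -
  define A where "A = (\<lambda>i::nat. {- int i + 1 .. int i - 1})"
  have inc: "incseq A" unfolding A_def incseq_def by auto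
  have un: "(\<Union>i. A i) = UNIV"
  proof safe
    fix x :: int
    have "x \<in> A (nat \<bar>x\<bar> + 1)" unfolding A_def by auto
    then show "x \<in> (\<Union>i. A i)" by blast
  qed auto
  have "(\<lambda>i. measure_pmf.prob mu (A i)) \<longlonglongrightarrow> measure_pmf.prob mu (\<Union>i. A i)"
    by (rule Lim_measure_incseq) (use inc in \<open>auto simp: measure_pmf.emeasure_finite\<close>)
  then have "(\<lambda>i. measure_pmf.prob mu (A i)) \<longlonglongrightarrow> 1" using un by simp
  then have "eventually (\<lambda>i. measure_pmf.prob mu (A i) > 1 - eps) sequentially"
    by (rule order_tendstoD) (use assms in simp)
  then obtain N where "measure_pmf.prob mu (A N) > 1 - eps"
    by (meson eventually_sequentially order_refl)
  then show ?thesis unfolding A_def by blast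
qed

theorem corollary2p4:
  fixes mu0 :: "int pmf" and eps :: real and R :: nat
  assumes "eps > 0" and "R > R_mu mu0 eps"
  shows "\<forall>n::nat. \<forall>w \<in> Omega0_ball n mu0 (2 powr (- real R) * eps).
           real_of_int \<bar>w ! (n - 1)\<bar> \<le> real R + 2 * eps * real n"
proof (intro allI ballI)
  fix n w assume w: "w \<in> Omega0_ball n mu0 (2 powr (- real R) * eps)"
  define p :: real where "p = (1/2)^R"
  have p2: "2 powr (- real R) = p" unfolding p_def by (rule powr_half)
  have p0: "p > 0" unfolding p_def by simp
  have wO: "w \<in> Omega0 n" and ball: "dist_norm (ell w) (embed mu0) < p * eps"
    using w p2 unfolding Omega0_ball_def Ball_Z_def by auto
  have n1: "n \<ge> 1" and lw: "length w = n" using wO unfolding Omega0_def by auto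
  define R0 where "R0 = R_mu mu0 eps"
  have R0: "measure_pmf.prob mu0 {- int R0 + 1 .. int R0 - 1} > 1 - eps"
    unfolding R0_def R_mu_def by (rule LeastI_ex) (rule ex_R[OF assms(1)])
  have RR0: "R0 < R" using assms(2) R0_def by simp
  have R1: "R \<ge> 1" using RR0 by simp
  have p_eq: "2 * p = (1/2)^(R-1)"
  proof -
    have "p = (1/2) * (1/2)^(R-1)" unfolding p_def using R1
      by (metis power_Suc Suc_diff_1 le_eq_less_or_eq less_le_trans zero_less_one)
    then show ?thesis by simp
  qed
  have p_le: "2 * p \<le> 1" unfolding p_eq by (simp add: power_le_one)
  define c where "c = 1 - 2 * p"
  define f where "f = fR c"
  have fL: "f \<in> Lip1" unfolding f_def by (rule fR_Lip1) (use p_le p0 c_def in auto)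
  have f0: "f h \<ge> 0" for h unfolding f_def fR_def by simp
  have fle: "f h \<le> 2 * p" for h unfolding f_def fR_def c_def using abs_phi_le[of h] p0 by auto
  have fbig: "f (Fin k) = 2 * p - (1/2)^v" if "\<bar>k\<bar> = int v" "v \<ge> R" for k v
  proof -
    have "(1/2::real)^v \<le> (1/2)^R" using that(2) by (simp add: power_decreasing)
    then have "(1/2::real)^v < 2 * p" using p0 unfolding p_def by linarith
    moreover have "\<bar>phi (Fin k)\<bar> = 1 - (1/2)^v" using that(1) abs_phi_Fin[of k] powr_half[of v] by simp
    ultimately show ?thesis unfolding f_def fR_def c_def by simp
  qed
  have fsmall: "f (Fin k) = 0" if "\<bar>k\<bar> \<le> int R - 1" for k
  proof -
    have "(1/2::real)^(R-1) \<le> (1/2)^(nat \<bar>k\<bar>)" using that by (intro power_decreasing) auto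
    then have "2 * p \<le> (1/2)^(nat \<bar>k\<bar>)" using p_eq by simp
    moreover have "\<bar>phi (Fin k)\<bar> = 1 - (1/2)^(nat \<bar>k\<bar>)" using abs_phi_Fin[of k] powr_half[of "nat \<bar>k\<bar>"] by simp
    ultimately show ?thesis unfolding f_def fR_def c_def by simp
  qed
  show "real_of_int \<bar>w ! (n - 1)\<bar> \<le> real R + 2 * eps * real n"
  proof (rule ccontr)
    assume "\<not> ?thesis"
    then have big: "real_of_int \<bar>w ! (n - 1)\<bar> > real R + 2 * eps * real n" by simp
    define I0 where "I0 = {- int R0 + 1 .. int R0 - 1}"
    have "measure_pmf.expectation (embed mu0) f = measure_pmf.expectation mu0 (\<lambda>k. f (Fin k))"
      unfolding embed_def by simp
    also have "\<dots> \<le> measure_pmf.expectation mu0 (\<lambda>k. 2 * p * indicator (UNIV - I0) k)"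
    proof (rule integral_mono)
      show "integrable (measure_pmf mu0) (\<lambda>k. f (Fin k))"
        by (rule integrable_bounded_pmf[where B="2*p"]) (use f0 fle in \<open>auto simp: abs_of_nonneg\<close>)
      show "integrable (measure_pmf mu0) (\<lambda>k. 2 * p * indicator (UNIV - I0) k)"
        by (rule integrable_bounded_pmf[where B="2*p"]) (use p0 in \<open>auto simp: indicator_def\<close>)
      fix k
      show "f (Fin k) \<le> 2 * p * indicator (UNIV - I0) k"
      proof (cases "k \<in> I0")
        case True
        then have "\<bar>k\<bar> \<le> int R - 1" using RR0 unfolding I0_def by auto
        then show ?thesis using fsmall p0 by simp
      next
        case False
        then show ?thesis using fle by simp
      qed
    qed
    also have "\<dots> = 2 * p * measure_pmf.prob mu0 (UNIV - I0)" by simp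
    also have "\<dots> = 2 * p * (1 - measure_pmf.prob mu0 I0)"
      using measure_pmf.prob_compl[of I0 mu0] by simp
    also have "\<dots> < 2 * p * eps" using R0 p0 unfolding I0_def by simp
    finally have Emu: "measure_pmf.expectation (embed mu0) f < 2 * p * eps" .
    have Eell: "measure_pmf.expectation (ell w) f < 3 * p * eps"
      using dist_norm_ge[OF fL, of "ell w" "embed mu0"] ball Emu by linarith
    define M where "M = nat \<bar>w ! (n - 1)\<bar>"
    have MR: "real M > real R + 2 * eps * real n" using big unfolding M_def by simp
    then have "real R < real M" using assms(1) by (smt (verit) of_nat_0_le_iff mult_nonneg_nonneg)
    then have MR1: "M \<ge> R" by simp
    have "\<forall>v\<in>{R..M}. \<exists>j. j < n \<and> \<bar>w ! j\<bar> = int v"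
    proof
      fix v assume "v \<in> {R..M}"
      then have "0 \<le> int v" "int v \<le> \<bar>w ! (n-1)\<bar>" unfolding M_def by auto
      then obtain j where "j \<le> n - 1" "\<bar>w ! j\<bar> = int v"
        using walk_ivt[OF wO, of "n-1" "int v"] n1 by auto
      then show "\<exists>j. j < n \<and> \<bar>w ! j\<bar> = int v" using n1 by (intro exI[of _ j]) auto
    qed
    then obtain J where J: "\<And>v. v \<in> {R..M} \<Longrightarrow> J v < n \<and> \<bar>w ! J v\<bar> = int v"
      by metis
    have injJ: "inj_on J {R..M}"
      by (rule inj_onI) (metis J of_nat_eq_iff)
    let ?S = "\<Sum>j<n. f (Fin (w ! j))"
    have "(\<Sum>j\<in>J ` {R..M}. f (Fin (w ! j))) \<le> ?S"
      by (rule sum_mono2) (use J f0 in auto)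
    moreover have "(\<Sum>j\<in>J ` {R..M}. f (Fin (w ! j))) = (\<Sum>v\<in>{R..M}. f (Fin (w ! J v)))"
      by (rule sum.reindex[OF injJ, unfolded comp_def])
    moreover have "(\<Sum>v\<in>{R..M}. f (Fin (w ! J v))) = (\<Sum>v\<in>{R..M}. 2 * p - (1/2)^v)"
      by (rule sum.cong) (use J fbig in auto)
    moreover have "(\<Sum>v\<in>{R..M}. 2 * p - (1/2::real)^v) = real (M - R + 1) * (2 * p) - (\<Sum>v\<in>{R..M}. (1/2)^v)"
      using MR1 by (simp add: sum_subtractf Suc_diff_le)
    moreover have "(\<Sum>v\<in>{R..M}. (1/2::real)^v) \<le> 2 * p"
    proof -
      have "{R..M} = {R..R + (M - R)}" using MR1 by simp
      then have "(\<Sum>v\<in>{R..M}. (1/2::real)^v) = 2*(1/2)^R - (1/2)^(R + (M-R))"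
        using geom_sum_half[of R "M - R"] by simp
      then show ?thesis unfolding p_def by simp
    qed
    ultimately have S: "?S \<ge> (real M - real R) * (2 * p)"
      using MR1 by (simp add: of_nat_diff algebra_simps)
    have "measure_pmf.expectation (ell w) f = ?S / real n"
    proof -
      have "w \<noteq> []" using lw n1 by auto
      then show ?thesis using expectation_ell[of w f] lw by simp
    qed
    also have "\<dots> \<ge> (real M - real R) * (2 * p) / real n"
      using S n1 by (simp add: divide_right_mono)
    finally have E2: "measure_pmf.expectation (ell w) f \<ge> (real M - real R) * (2 * p) / real n" .
    have "(2 * eps * real n) * (2 * p) < (real M - real R) * (2 * p)"
      using MR p0 by (intro mult_strict_right_mono) auto
    then have "4 * p * eps < (real M - real R) * (2 * p) / real n"
      using n1 by (simp add: field_simps)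
    moreover have "3 * p * eps < 4 * p * eps" using p0 assms(1) by simp
    ultimately show False using E2 Eell by linarith
  qed
qed

end
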